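(* Let $(A,E,\varepsilon,\tau)$ be an analytical $B$-$B$-non-commutative probability space and let $\widetilde{E}:L_2(A,\tau)\to L_2(B,\tau_B)$ denote the orthogonal projection. For all $a\in A$, $b,b_1,b_2\in B$, $\xi,\xi_1,\xi_2\in L_2(A,\tau)$ and $\zeta\in L_2(B,\tau_B)$: (i) $\tau(\xi)=\tau_B(\widetilde{E}(\xi))$; (ii) $\widetilde{E}(aL_b)=\widetilde{E}(aR_b)$; (iii) $\widetilde{E}(L_{b_1}R_{b_2}\xi)=b_1\widetilde{E}(\xi)b_2$; (iv) if $a\in A_\ell$, then $\widetilde{E}(a\zeta)=E(a)\zeta$; (v) if $a\in A_r$, then $\widetilde{E}(a\zeta)=\zeta E(a)$; (vi) if $\tau(L_b\xi_1)=\tau(L_b\xi_2)$ for all $b\in B$, then $\widetilde{E}(\xi_1)=\widetilde{E}(\xi_2)$; (vii) if $\tau(R_b\xi_1)=\tau(R_b\xi_2)$ for all $b\in B$, then $\widetilde{E}(\xi_1)=\widetilde{E}(\xi_2)$.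
   Context: Let $B$ be a unital $*$-algebra. A $B$-$B$-non-commutative probability space is a triple $(A,E,\varepsilon)$: $A$ a unital $*$-algebra, $\varepsilon:B\otimes B^{\mathrm{op}}\to A$ a unital $*$-homomorphism injective on $B\otimes 1$ and on $1\otimes B^{\mathrm{op}}$, and $E:A\to B$ unital linear with $E(\varepsilon(b_1\otimes b_2)a)=b_1E(a)b_2$ and $E(a\varepsilon(b\otimes 1))=E(a\varepsilon(1\otimes b))$. Write $L_b=\varepsilon(b\otimes1)$, $R_b=\varepsilon(1\otimes b)$, $A_\ell$ for the commutant of $\{R_b\}$ and $A_r$ for the commutant of $\{L_b\}$ in $A$. An analytical $B$-$B$-non-commutative probability space is $(A,E,\varepsilon,\tau)$ where $\tau$ is a state on $A$ with $\tau(a)=\tau(L_{E(a)})=\tau(R_{E(a)})$, $\tau_B(b):=\tau(L_b)$ is a tracial state on $B$, left multiplication by each $a\in A$ is bounded on $A/N_\tau$ ($N_\tau=\{a:\tau(a^*a)=0\}$) and so extends to a bounded operator on the Hilbert space $L_2(A,\tau)$ (completion of $A/N_\tau$ with $\langle a_1,a_2\rangle=\tau(a_2^*a_1)$), and $E$ is completely positive on $A_\ell$ and on $A_r$. Elements of $A$ are written for their classes in $L_2(A,\tau)$. $L_2(B,\tau_B)$ is identified with the closure of $\{L_b+N_\tau\}$ in $L_2(A,\tau)$; left and right multiplication by elements of $B$ extend to bounded operators on $L_2(B,\tau_B)$, and for $\zeta\in L_2(B,\tau_B)$ one has $L_{b_1}R_{b_2}\zeta=b_1\zeta b_2$. For $\xi\in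 L_2(A,\tau)$, $\tau(\xi):=\langle \xi,1_A+N_\tau\rangle$, and $\tau_B(\zeta)=\tau(\zeta)$ for $\zeta\in L_2(B,\tau_B)$. *)

theory Defs
  imports Complex_Main
begin

(* Complex *-algebras are modelled as a ring type together with an explicit
   complex scalar multiplication sm and an involution st. *)
definition star_algebra :: "(complex \<Rightarrow> 'a::ring_1 \<Rightarrow> 'a) \<Rightarrow> ('a \<Rightarrow> 'a) \<Rightarrow> bool" where
  "star_algebra sm st \<longleftrightarrow>
     (\<forall>x. sm 1 x = x) \<and> (\<forall>c d x. sm c (sm d x) = sm (c * d) x) \<and>
     (\<forall>c d x. sm (c + d) x = sm c x + sm d x) \<and> (\<forall>c x y. sm c (x + y) = sm c x + sm c y) \<and>
     (\<forall>c x y. sm c (x * y) = sm c x * y) \<and> (\<forall>c x y. sm c (x * y) = x * sm c y) \<and>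
     (\<forall>x. st (st x) = x) \<and> (\<forall>x y. st (x + y) = st x + st y) \<and>
     (\<forall>x y. st (x * y) = st y * st x) \<and> (\<forall>c x. st (sm c x) = sm (cnj c) (st x))"

definition is_clinear :: "(complex \<Rightarrow> 'a::ab_group_add \<Rightarrow> 'a) \<Rightarrow> (complex \<Rightarrow> 'c::ab_group_add \<Rightarrow> 'c) \<Rightarrow> ('a \<Rightarrow> 'c) \<Rightarrow> bool" where
  "is_clinear s1 s2 f \<longleftrightarrow> (\<forall>x y. f (x + y) = f x + f y) \<and> (\<forall>c x. f (s1 c x) = s2 c (f x))"

definition unital_star_hom ::
  "(complex \<Rightarrow> 'b::ring_1 \<Rightarrow> 'b) \<Rightarrow> ('b \<Rightarrow> 'b) \<Rightarrow> (complex \<Rightarrow> 'a::ring_1 \<Rightarrow> 'a) \<Rightarrow> ('a \<Rightarrow> 'a) \<Rightarrow> ('b \<Rightarrow> 'a) \<Rightarrow> bool" where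
  "unital_star_hom smB stB smA stA f \<longleftrightarrow> is_clinear smB smA f \<and> f 1 = 1 \<and>
     (\<forall>x y. f (x * y) = f x * f y) \<and> (\<forall>x. f (stB x) = stA (f x))"

(* unital *-homomorphism B^op \<rightarrow> A, i.e. anti-multiplicative on B *)
definition unital_star_antihom ::
  "(complex \<Rightarrow> 'b::ring_1 \<Rightarrow> 'b) \<Rightarrow> ('b \<Rightarrow> 'b) \<Rightarrow> (complex \<Rightarrow> 'a::ring_1 \<Rightarrow> 'a) \<Rightarrow> ('a \<Rightarrow> 'a) \<Rightarrow> ('b \<Rightarrow> 'a) \<Rightarrow> bool" where
  "unital_star_antihom smB stB smA stA f \<longleftrightarrow> is_clinear smB smA f \<and> f 1 = 1 \<and>
     (\<forall>x y. f (x * y) = f y * f x) \<and> (\<forall>x. f (stB x) = stA (f x))"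

(* B-B-non-commutative probability space; \<epsilon>(b1 \<otimes> b2) = L b1 * R b2 *)
definition BB_ncps ::
  "(complex \<Rightarrow> 'a::ring_1 \<Rightarrow> 'a) \<Rightarrow> ('a \<Rightarrow> 'a) \<Rightarrow> (complex \<Rightarrow> 'b::ring_1 \<Rightarrow> 'b) \<Rightarrow> ('b \<Rightarrow> 'b) \<Rightarrow>
   ('b \<Rightarrow> 'a) \<Rightarrow> ('b \<Rightarrow> 'a) \<Rightarrow> ('a \<Rightarrow> 'b) \<Rightarrow> bool" where
  "BB_ncps smA stA smB stB L R E \<longleftrightarrow>
     star_algebra smA stA \<and> star_algebra smB stB \<and>
     unital_star_hom smB stB smA stA L \<and> unital_star_antihom smB stB smA stA R \<and>
     (\<forall>b1 b2. L b1 * R b2 = R b2 * L b1) \<and> inj L \<and> inj R \<and>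
     is_clinear smA smB E \<and> E 1 = 1 \<and>
     (\<forall>b1 b2 a. E (L b1 * R b2 * a) = b1 * E a * b2) \<and>
     (\<forall>a b. E (a * L b) = E (a * R b))"

definition left_alg :: "('b \<Rightarrow> 'a::ring_1) \<Rightarrow> 'a set" where
  "left_alg R = {a. \<forall>b. a * R b = R b * a}"

definition right_alg :: "('b \<Rightarrow> 'a::ring_1) \<Rightarrow> 'a set" where
  "right_alg L = {a. \<forall>b. a * L b = L b * a}"

definition pos_matrix :: "('a::ring_1 \<Rightarrow> 'a) \<Rightarrow> 'a set \<Rightarrow> nat \<Rightarrow> (nat \<Rightarrow> nat \<Rightarrow> 'a) \<Rightarrow> bool" where
  "pos_matrix st S n X \<longleftrightarrow> (\<exists>(m::nat) C. (\<forall>p<m. \<forall>l<n. \<forall>i<n. C p l i \<in> S) \<and>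
     (\<forall>i<n. \<forall>j<n. X i j = (\<Sum>p<m. \<Sum>l<n. st (C p l i) * C p l j)))"

definition completely_positive_on :: "('a::ring_1 \<Rightarrow> 'a) \<Rightarrow> ('b::ring_1 \<Rightarrow> 'b) \<Rightarrow> 'a set \<Rightarrow> ('a \<Rightarrow> 'b) \<Rightarrow> bool" where
  "completely_positive_on stA stB S E \<longleftrightarrow>
     (\<forall>n X. (\<forall>i<n. \<forall>j<n. X i j \<in> S) \<longrightarrow> pos_matrix stA S n X \<longrightarrow> pos_matrix stB UNIV n (\<lambda>i j. E (X i j)))"

definition is_state :: "(complex \<Rightarrow> 'a::ring_1 \<Rightarrow> 'a) \<Rightarrow> ('a \<Rightarrow> 'a) \<Rightarrow> ('a \<Rightarrow> complex) \<Rightarrow> bool" where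
  "is_state sm st \<phi> \<longleftrightarrow> is_clinear sm (*) \<phi> \<and> \<phi> 1 = 1 \<and>
     (\<forall>a. Im (\<phi> (st a * a)) = 0 \<and> Re (\<phi> (st a * a)) \<ge> 0)"

definition analytical_BB_ncps ::
  "(complex \<Rightarrow> 'a::ring_1 \<Rightarrow> 'a) \<Rightarrow> ('a \<Rightarrow> 'a) \<Rightarrow> (complex \<Rightarrow> 'b::ring_1 \<Rightarrow> 'b) \<Rightarrow> ('b \<Rightarrow> 'b) \<Rightarrow>
   ('b \<Rightarrow> 'a) \<Rightarrow> ('b \<Rightarrow> 'a) \<Rightarrow> ('a \<Rightarrow> 'b) \<Rightarrow> ('a \<Rightarrow> complex) \<Rightarrow> bool" where
  "analytical_BB_ncps smA stA smB stB L R E \<tau> \<longleftrightarrow>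
     BB_ncps smA stA smB stB L R E \<and>
     is_state smA stA \<tau> \<and>
     (\<forall>a. \<tau> a = \<tau> (L (E a)) \<and> \<tau> a = \<tau> (R (E a))) \<and>
     is_state smB stB (\<lambda>b. \<tau> (L b)) \<and> (\<forall>b1 b2. \<tau> (L (b1 * b2)) = \<tau> (L (b2 * b1))) \<and>
     (\<forall>a. \<exists>C. \<forall>x. Re (\<tau> (stA (a * x) * (a * x))) \<le> C * Re (\<tau> (stA x * x))) \<and>
     completely_positive_on stA stB (left_alg R) E \<and>
     completely_positive_on stA stB (right_alg L) E"

definition hnorm :: "('h \<Rightarrow> 'h \<Rightarrow> complex) \<Rightarrow> 'h \<Rightarrow> real" where
  "hnorm ip x = sqrt (Re (ip x x))"

definition complex_hilbert :: "(complex \<Rightarrow> 'h::ab_group_add \<Rightarrow> 'h) \<Rightarrow> ('h \<Rightarrow> 'h \<Rightarrow> complex) \<Rightarrow> bool" where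
  "complex_hilbert sm ip \<longleftrightarrow>
     (\<forall>x. sm 1 x = x) \<and> (\<forall>c d x. sm c (sm d x) = sm (c * d) x) \<and>
     (\<forall>c d x. sm (c + d) x = sm c x + sm d x) \<and> (\<forall>c x y. sm c (x + y) = sm c x + sm c y) \<and>
     (\<forall>x y z. ip (x + y) z = ip x z + ip y z) \<and> (\<forall>c x y. ip (sm c x) y = c * ip x y) \<and>
     (\<forall>x y. ip x y = cnj (ip y x)) \<and> (\<forall>x. Re (ip x x) \<ge> 0) \<and> (\<forall>x. ip x x = 0 \<longrightarrow> x = 0) \<and>
     (\<forall>X::nat \<Rightarrow> 'h. (\<forall>e>0. \<exists>N. \<forall>m\<ge>N. \<forall>n\<ge>N. hnorm ip (X m - X n) < e) \<longrightarrow>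
          (\<exists>l. \<forall>e>0. \<exists>N. \<forall>n\<ge>N. hnorm ip (X n - l) < e))"

definition bounded_op :: "(complex \<Rightarrow> 'h::ab_group_add \<Rightarrow> 'h) \<Rightarrow> ('h \<Rightarrow> 'h \<Rightarrow> complex) \<Rightarrow> ('h \<Rightarrow> 'h) \<Rightarrow> bool" where
  "bounded_op sm ip T \<longleftrightarrow> is_clinear sm sm T \<and> (\<exists>C. \<forall>x. hnorm ip (T x) \<le> C * hnorm ip x)"

(* (H, sH, ip, \<iota>) is L_2(A,\<tau>): \<iota> a is the class a + N_\<tau>, with dense range in the complete space H;
   lam a is the bounded extension of left multiplication by a. *)
definition L2_space ::
  "(complex \<Rightarrow> 'a::ring_1 \<Rightarrow> 'a) \<Rightarrow> ('a \<Rightarrow> 'a) \<Rightarrow> ('a \<Rightarrow> complex) \<Rightarrow>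
   (complex \<Rightarrow> 'h::ab_group_add \<Rightarrow> 'h) \<Rightarrow> ('h \<Rightarrow> 'h \<Rightarrow> complex) \<Rightarrow> ('a \<Rightarrow> 'h) \<Rightarrow> ('a \<Rightarrow> 'h \<Rightarrow> 'h) \<Rightarrow> bool" where
  "L2_space smA stA \<tau> sH ip \<iota> lam \<longleftrightarrow>
     complex_hilbert sH ip \<and> is_clinear smA sH \<iota> \<and>
     (\<forall>x y. ip (\<iota> x) (\<iota> y) = \<tau> (stA y * x)) \<and>
     (\<forall>\<xi> e. e > 0 \<longrightarrow> (\<exists>x. hnorm ip (\<xi> - \<iota> x) < e)) \<and>
     (\<forall>a. bounded_op sH ip (lam a) \<and> (\<forall>x. lam a (\<iota> x) = \<iota> (a * x)))"

(* L_2(B,\<tau>_B): closure of {L_b + N_\<tau>} *)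
definition L2B :: "('h::ab_group_add \<Rightarrow> 'h \<Rightarrow> complex) \<Rightarrow> ('a \<Rightarrow> 'h) \<Rightarrow> ('b \<Rightarrow> 'a) \<Rightarrow> 'h set" where
  "L2B ip \<iota> L = {\<xi>. \<forall>e>0. \<exists>b. hnorm ip (\<xi> - \<iota> (L b)) < e}"

definition orth_proj :: "('h::ab_group_add \<Rightarrow> 'h \<Rightarrow> complex) \<Rightarrow> 'h set \<Rightarrow> 'h \<Rightarrow> 'h" where
  "orth_proj ip K \<xi> = (THE \<eta>. \<eta> \<in> K \<and> (\<forall>\<kappa>\<in>K. ip (\<xi> - \<eta>) \<kappa> = 0))"

definition tauH :: "('h \<Rightarrow> 'h \<Rightarrow> complex) \<Rightarrow> ('a::ring_1 \<Rightarrow> 'h) \<Rightarrow> 'h \<Rightarrow> complex" where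
  "tauH ip \<iota> \<xi> = ip \<xi> (\<iota> 1)"

end

theory Submission
  imports Defs
begin


lemma add_hom_diff:
  fixes f :: "'x::ab_group_add \<Rightarrow> 'y::ab_group_add"
  assumes "\<And>x y. f (x + y) = f x + f y"
  shows "f (x - y) = f x - f y"
  by (metis assms add_diff_cancel diff_add_cancel)

lemma add_hom_zero:
  fixes f :: "'x::ab_group_add \<Rightarrow> 'y::ab_group_add"
  assumes "\<And>x y. f (x + y) = f x + f y"
  shows "f 0 = 0"
  by (metis add_hom_diff assms diff_self)

lemma eps_zero:
  fixes c M :: real
  assumes "\<And>e. e > 0 \<Longrightarrow> c \<le> e * M" "c \<ge> 0" "M \<ge> 0"
  shows "c = 0"
proof (rule ccontr)
  assume "c \<noteq> 0" then have cp: "c > 0" using assms by simp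
  have "c \<le> (c / (2 * (M + 1))) * M" using assms(1)[of "c / (2 * (M + 1))"] cp assms(3) by simp
  also have "\<dots> < c" using cp assms(3) by (simp add: field_simps) (smt (verit) mult_nonneg_nonneg)
  finally show False by simp
qed

locale hilb =
  fixes sm :: "complex \<Rightarrow> 'h::ab_group_add \<Rightarrow> 'h" and ip :: "'h \<Rightarrow> 'h \<Rightarrow> complex"
  assumes H: "complex_hilbert sm ip"
begin

lemmas Hs = H[unfolded complex_hilbert_def]

abbreviation "nn x \<equiv> Re (ip x x)"
abbreviation "hn x \<equiv> hnorm ip x"

lemma sm1[simp]: "sm 1 x = x" using Hs[THEN conjunct1] by blast
lemma sm_sm[simp]: "sm c (sm d x) = sm (c * d) x" using Hs[THEN conjunct2, THEN conjunct1] by blast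
lemma sm_add_left: "sm (c + d) x = sm c x + sm d x" using Hs[THEN conjunct2, THEN conjunct2, THEN conjunct1] by blast
lemma sm_add_right: "sm c (x + y) = sm c x + sm c y" using Hs[THEN conjunct2, THEN conjunct2, THEN conjunct2, THEN conjunct1] by blast
lemma ip_add_left: "ip (x + y) z = ip x z + ip y z" using Hs[THEN conjunct2, THEN conjunct2, THEN conjunct2, THEN conjunct2, THEN conjunct1] by blast
lemma ip_sm_left[simp]: "ip (sm c x) y = c * ip x y" using Hs[THEN conjunct2, THEN conjunct2, THEN conjunct2, THEN conjunct2, THEN conjunct2, THEN conjunct1] by blast
lemma ip_cnj: "ip x y = cnj (ip y x)" using Hs[THEN conjunct2, THEN conjunct2, THEN conjunct2, THEN conjunct2, THEN conjunct2, THEN conjunct2, THEN conjunct1] by blast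
lemma ip_pos: "Re (ip x x) \<ge> 0" using Hs[THEN conjunct2, THEN conjunct2, THEN conjunct2, THEN conjunct2, THEN conjunct2, THEN conjunct2, THEN conjunct2, THEN conjunct1] by blast
lemma ip_zero_imp: "ip x x = 0 \<Longrightarrow> x = 0" using Hs[THEN conjunct2, THEN conjunct2, THEN conjunct2, THEN conjunct2, THEN conjunct2, THEN conjunct2, THEN conjunct2, THEN conjunct2, THEN conjunct1] by blast
lemma complete: fixes X :: "nat \<Rightarrow> 'h" assumes "(\<forall>e>0. \<exists>N. \<forall>m\<ge>N. \<forall>n\<ge>N. hn (X m - X n) < e)"
  shows "(\<exists>l. \<forall>e>0. \<exists>N. \<forall>n\<ge>N. hn (X n - l) < e)"
  by (rule mp[OF spec[OF Hs[THEN conjunct2, THEN conjunct2, THEN conjunct2, THEN conjunct2, THEN conjunct2, THEN conjunct2, THEN conjunct2, THEN conjunct2, THEN conjunct2], of X] assms])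

lemma sm_diff_right: "sm c (x - y) = sm c x - sm c y"
  by (rule add_hom_diff) (rule sm_add_right)
lemma sm_zero_right[simp]: "sm c 0 = 0"
  by (rule add_hom_zero) (rule sm_add_right)
lemma sm_zero_left[simp]: "sm 0 x = 0"
  using sm_add_left[of 0 0 x] by simp
lemma sm_minus1: "sm (-1) x = - x"
  using sm_add_left[of 1 "-1" x] by (simp add: eq_neg_iff_add_eq_0 add.commute)
lemma sm_two: "sm 2 x = x + x"
  using sm_add_left[of 1 1 x] by simp

lemma ip_diff_left: "ip (x - y) z = ip x z - ip y z"
  using add_hom_diff[of "\<lambda>x. ip x z"] ip_add_left by blast
lemma ip_zero_left[simp]: "ip 0 z = 0"
  using add_hom_zero[of "\<lambda>x. ip x z"] ip_add_left by blast
lemma ip_add_right: "ip z (x + y) = ip z x + ip z y"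
  by (metis complex_cnj_add ip_add_left ip_cnj)
lemma ip_diff_right: "ip z (x - y) = ip z x - ip z y"
  using add_hom_diff[of "\<lambda>x. ip z x"] ip_add_right by blast
lemma ip_zero_right[simp]: "ip z 0 = 0"
  using add_hom_zero[of "\<lambda>x. ip z x"] ip_add_right by blast
lemma ip_sm_right[simp]: "ip x (sm c y) = cnj c * ip x y"
  by (metis complex_cnj_mult ip_cnj ip_sm_left)
lemma ip_minus_left[simp]: "ip (- x) z = - ip x z"
  using ip_diff_left[of 0 x z] by simp
lemma ip_minus_right[simp]: "ip z (- x) = - ip z x"
  using ip_diff_right[of z 0 x] by simp

lemma ip_self_real: "ip x x = of_real (Re (ip x x))"
proof -
  have "Im (ip x x) = 0" using ip_cnj[of x x] by (metis cnj.simps(2) complex.expand neg_equal_zero)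
  then show ?thesis by (simp add: complex_eqI)
qed

lemma nn_zero: "nn x = 0 \<longleftrightarrow> x = 0"
proof
  assume "nn x = 0" then show "x = 0" using ip_self_real[of x] ip_zero_imp by simp
qed simp

lemma hn_sq: "(hn x)^2 = nn x" unfolding hnorm_def using ip_pos by simp
lemma hn_nonneg: "hn x \<ge> 0" unfolding hnorm_def using ip_pos by simp
lemma hn_zero: "hn x = 0 \<longleftrightarrow> x = 0" unfolding hnorm_def using nn_zero ip_pos by simp
lemma hn_zero'[simp]: "hn 0 = 0" using hn_zero by simp

lemma expand: "nn (x + sm c y) = nn x + 2 * Re (cnj c * ip x y) + (cmod c)^2 * nn y"
proof -
  have "ip (x + sm c y) (x + sm c y) = ip x x + cnj c * ip x y + c * ip y x + c * cnj c * ip y y"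
    by (simp add: ip_add_left ip_add_right algebra_simps)
  moreover have "Re (c * ip y x) = Re (cnj c * ip x y)"
    by (metis complex_cnj_cnj complex_cnj_mult cnj.simps(1) ip_cnj)
  moreover have "c * cnj c * ip y y = of_real ((cmod c)^2 * nn y)"
    by (metis complex_norm_square ip_self_real of_real_mult)
  ultimately show ?thesis by simp
qed

lemma expand_plus: "nn (x + y) = nn x + 2 * Re (ip x y) + nn y"
  using expand[of x 1 y] by simp
lemma expand_minus: "nn (x - y) = nn x - 2 * Re (ip x y) + nn y"
  using expand[of x "-1" y] by (simp add: sm_minus1)

lemma cs_sq: "(cmod (ip x y))^2 \<le> nn x * nn y"
proof (cases "nn y = 0")
  case True then show ?thesis using nn_zero ip_pos by (simp)
next
  case False
  then have ny: "nn y > 0" using ip_pos[of y] by simp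
  define p where "p = ip x y"
  define c where "c = - p / of_real (nn y)"
  have "0 \<le> nn (x + sm c y)" by (rule ip_pos)
  also have "\<dots> = nn x + 2 * Re (cnj c * p) + (cmod c)^2 * nn y" unfolding p_def by (rule expand)
  also have "cnj c * p = - of_real ((cmod p)^2 / nn y)"
    unfolding c_def using ny complex_norm_square[of p] by (simp add: field_simps mult.commute)
  also have "(cmod c)^2 = (cmod p)^2 / (nn y)^2"
    unfolding c_def using ny by (simp add: norm_divide power_divide)
  finally have "0 \<le> nn x - (cmod p)^2 / nn y" using ny by (simp add: power2_eq_square field_simps)
  then show ?thesis unfolding p_def using ny by (simp add: field_simps)
qed

lemma cs: "cmod (ip x y) \<le> hn x * hn y"
proof -
  have "(cmod (ip x y))^2 \<le> (hn x * hn y)^2" using cs_sq by (simp add: power_mult_distrib hn_sq)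
  then show ?thesis using hn_nonneg by (meson mult_nonneg_nonneg power2_le_imp_le)
qed

lemma tri: "hn (x + y) \<le> hn x + hn y"
proof -
  have "Re (ip x y) \<le> hn x * hn y" using cs complex_Re_le_cmod order_trans by blast
  then have "(hn (x + y))^2 \<le> (hn x + hn y)^2" by (simp add: hn_sq expand_plus power2_sum)
  then show ?thesis using hn_nonneg by (meson add_nonneg_nonneg power2_le_imp_le)
qed

lemma hn_minus: "hn (- x) = hn x" unfolding hnorm_def by simp
lemma hn_commute: "hn (x - y) = hn (y - x)" by (metis hn_minus minus_diff_eq)
lemma tri3: "hn (x - z) \<le> hn (x - y) + hn (y - z)"
  using tri[of "x - y" "y - z"] by simp

lemma nn_sm: "nn (sm c x) = (cmod c)^2 * nn x"
  using expand[of 0 c x] by simp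

lemma dense_zero:
  fixes g :: "'h \<Rightarrow> complex"
  assumes "\<And>u v. g (u - v) = g u - g v" "\<And>u. cmod (g u) \<le> M * hn u"
    and "\<forall>e>0. \<exists>s. g s = 0 \<and> hn (\<xi> - s) < e"
  shows "g \<xi> = 0"
proof -
  define M' where "M' = max M 0"
  have M: "M' \<ge> 0" unfolding M'_def by simp
  have bd: "cmod (g u) \<le> M' * hn u" for u
    using assms(2)[of u] hn_nonneg[of u] unfolding M'_def by (smt (verit) mult_right_mono)
  have "cmod (g \<xi>) = 0"
  proof (rule eps_zero[where M = M'])
    fix e :: real assume "e > 0"
    then obtain s where s: "g s = 0" "hn (\<xi> - s) < e" using assms(3) by blast
    have "cmod (g \<xi>) = cmod (g (\<xi> - s))" using assms(1) s by simp
    also have "\<dots> \<le> M' * hn (\<xi> - s)" by (rule bd)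
    also have "\<dots> \<le> e * M'" using s M by (simp add: mult.commute mult_left_mono)
    finally show "cmod (g \<xi>) \<le> e * M'" .
  qed (use M in auto)
  then show ?thesis by simp
qed


lemma nn_eq_hn: "nn x < e^2 \<Longrightarrow> e > 0 \<Longrightarrow> hn x < e"
  unfolding hnorm_def by (metis ip_pos real_sqrt_less_iff real_sqrt_abs abs_of_pos)

lemma proj_exists:
  assumes K0: "0 \<in> K" and Kadd: "\<And>x y. x \<in> K \<Longrightarrow> y \<in> K \<Longrightarrow> x + y \<in> K"
    and Ksm: "\<And>c x. x \<in> K \<Longrightarrow> sm c x \<in> K"
    and Kcl: "\<And>\<xi>. (\<forall>e>0. \<exists>\<kappa>\<in>K. hn (\<xi> - \<kappa>) < e) \<Longrightarrow> \<xi> \<in> K"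
  shows "\<exists>\<eta>\<in>K. \<forall>\<kappa>\<in>K. ip (\<xi> - \<eta>) \<kappa> = 0"
proof -
  have Kdiff: "x - y \<in> K" if "x \<in> K" "y \<in> K" for x y
    using Kadd[OF that(1) Ksm[OF that(2), of "-1"]] by (simp add: sm_minus1)
  define D where "D = (\<lambda>\<kappa>. nn (\<xi> - \<kappa>)) ` K"
  define d where "d = Inf D"
  have Dne: "D \<noteq> {}" using K0 unfolding D_def by blast
  have Dbdd: "bdd_below D" unfolding D_def bdd_below_def using ip_pos by blast
  have dle: "d \<le> nn (\<xi> - \<kappa>)" if "\<kappa> \<in> K" for \<kappa>
    unfolding d_def D_def using that Dbdd D_def by (simp add: cInf_lower)
  have d0: "d \<ge> 0" unfolding d_def using Dne ip_pos D_def by (auto intro: cInf_greatest)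
  have "\<exists>\<kappa>\<in>K. nn (\<xi> - \<kappa>) < d + 1 / real (Suc k)" for k
  proof -
    have "Inf D < d + 1 / real (Suc k)" unfolding d_def by simp
    then obtain x where "x \<in> D" "x < d + 1 / real (Suc k)" using cInf_lessD[OF Dne] by blast
    then show ?thesis unfolding D_def by blast
  qed
  then obtain f where f: "\<And>k. f k \<in> K" "\<And>k. nn (\<xi> - f k) < d + 1 / real (Suc k)" by metis
  have cau: "nn (f m - f n) \<le> 2 / real (Suc m) + 2 / real (Suc n)" for m n
  proof -
    define x where "x = \<xi> - f m"
    define y where "y = \<xi> - f n"
    define z where "z = \<xi> - sm (1/2) (f m + f n)"
    have "sm (1/2) (f m + f n) \<in> K" using f Kadd Ksm by blast
    then have "d \<le> nn z" unfolding z_def by (rule dle)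
    have "x + y = sm 2 z"
      unfolding x_def y_def z_def sm_diff_right by (simp add: sm_two)
    then have "nn (x + y) = 4 * nn z" by (simp add: nn_sm)
    moreover have "x - y = f n - f m" unfolding x_def y_def by simp
    moreover have "nn (f n - f m) = nn (f m - f n)" by (metis hn_commute hn_sq)
    ultimately have "nn (x - y) = nn (f m - f n)" by simp
    moreover have "nn (x + y) + nn (x - y) = 2 * nn x + 2 * nn y"
      by (simp add: expand_plus expand_minus)
    moreover have "nn x < d + 1 / real (Suc m)" "nn y < d + 1 / real (Suc n)"
      unfolding x_def y_def using f(2) by auto
    ultimately show ?thesis using \<open>nn (x + y) = 4 * nn z\<close> \<open>d \<le> nn z\<close> by linarith
  qed
  have "\<exists>N. \<forall>m\<ge>N. \<forall>n\<ge>N. hn (f m - f n) < e" if "e > 0" for e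
  proof -
    obtain N :: nat where N: "4 / e^2 < real N" using reals_Archimedean2 by blast
    have "hn (f m - f n) < e" if "m \<ge> N" "n \<ge> N" for m n
    proof (rule nn_eq_hn[OF _ \<open>e > 0\<close>])
      have "2 / real (Suc m) \<le> 2 / real (Suc N)" "2 / real (Suc n) \<le> 2 / real (Suc N)"
        using that by (simp_all add: frac_le)
      moreover have "4 / real (Suc N) < e^2"
        using N \<open>e > 0\<close> by (simp add: field_simps) (smt (verit) mult_pos_pos zero_less_power)
      ultimately show "nn (f m - f n) < e^2" using cau[of m n] by linarith
    qed
    then show ?thesis by blast
  qed
  then obtain l where l: "\<forall>e>0. \<exists>N. \<forall>n\<ge>N. hn (f n - l) < e" using complete by blast
  have lK: "l \<in> K"
  proof (rule Kcl, intro allI impI)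
    fix e :: real assume "e > 0"
    then obtain N where "\<forall>n\<ge>N. hn (f n - l) < e" using l by blast
    then show "\<exists>\<kappa>\<in>K. hn (l - \<kappa>) < e" using f(1) hn_commute by (metis order_refl)
  qed
  have lmin: "hn (\<xi> - l) \<le> sqrt d + e" if "e > 0" for e
  proof -
    obtain N where N: "\<forall>n\<ge>N. hn (f n - l) < e/2" using l \<open>e > 0\<close> by (meson half_gt_zero)
    obtain M :: nat where M: "4 / e^2 < real M" using reals_Archimedean2 by blast
    define k where "k = max N M"
    have 1: "hn (f k - l) < e/2" using N k_def by simp
    have "1 / real (Suc k) \<le> 1 / real (Suc M)" unfolding k_def by (simp add: frac_le)
    moreover have "1 / real (Suc M) < (e/2)^2"
      using M \<open>e > 0\<close> by (simp add: field_simps power2_eq_square) (smt (verit) mult_pos_pos)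
    ultimately have "nn (\<xi> - f k) < d + (e/2)^2" using f(2)[of k] by linarith
    also have "\<dots> \<le> (sqrt d + e/2)^2" using d0 \<open>e > 0\<close> by (simp add: power2_sum)
    finally have "hn (\<xi> - f k) < sqrt d + e/2"
      using d0 \<open>e > 0\<close> by (intro nn_eq_hn) (auto intro: add_nonneg_pos)
    then show ?thesis using tri3[of \<xi> l "f k"] 1 by linarith
  qed
  have "hn (\<xi> - l) \<le> sqrt d" by (rule field_le_epsilon) (use lmin in auto)
  then have wmin: "nn (\<xi> - l) \<le> d" using hn_nonneg d0
    by (metis hn_sq power_mono real_sqrt_pow2)
  have "ip (\<xi> - l) \<kappa> = 0" if kK: "\<kappa> \<in> K" for \<kappa>
  proof (rule ccontr)
    define w where "w = \<xi> - l"
    define p where "p = ip w \<kappa>"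
    assume "ip (\<xi> - l) \<kappa> \<noteq> 0"
    then have pp: "(cmod p)^2 > 0" unfolding p_def w_def by simp
    define t :: real where "t = 1 / (nn \<kappa> + 1)"
    have tp: "t > 0" unfolding t_def using ip_pos[of \<kappa>] by simp
    have tk: "t * nn \<kappa> < 1" unfolding t_def using ip_pos[of \<kappa>] by (simp add: field_simps)
    define c where "c = - (of_real t * p)"
    have "l - sm c \<kappa> \<in> K" using Kdiff lK Ksm kK by blast
    then have "d \<le> nn (\<xi> - (l - sm c \<kappa>))" by (rule dle)
    also have "\<xi> - (l - sm c \<kappa>) = w + sm c \<kappa>" unfolding w_def by simp
    also have "nn (w + sm c \<kappa>) = nn w + 2 * Re (cnj c * p) + (cmod c)^2 * nn \<kappa>"
      unfolding p_def by (rule expand)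
    also have "cnj c * p = - of_real (t * (cmod p)^2)"
      unfolding c_def using complex_norm_square[of p] by (simp add: mult.commute mult.left_commute)
    also have "(cmod c)^2 = t^2 * (cmod p)^2" unfolding c_def using tp
      by (simp add: norm_mult power_mult_distrib)
    finally have "d \<le> nn w - 2 * t * (cmod p)^2 + t^2 * (cmod p)^2 * nn \<kappa>" by simp
    with wmin have "2 * t * (cmod p)^2 \<le> t * (cmod p)^2 * (t * nn \<kappa>)"
      unfolding w_def by (simp add: power2_eq_square algebra_simps)
    then have "2 \<le> t * nn \<kappa>" using tp pp by (simp add: mult.assoc)
    then show False using tk by simp
  qed
  then show ?thesis using lK by blast
qed

lemma proj_unique:
  assumes Kdiff: "\<And>x y. x \<in> K \<Longrightarrow> y \<in> K \<Longrightarrow> x - y \<in> K"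
    and "\<eta>1 \<in> K" "\<forall>\<kappa>\<in>K. ip (\<xi> - \<eta>1) \<kappa> = 0"
    and "\<eta>2 \<in> K" "\<forall>\<kappa>\<in>K. ip (\<xi> - \<eta>2) \<kappa> = 0"
  shows "\<eta>1 = \<eta>2"
proof -
  have w: "\<eta>1 - \<eta>2 \<in> K" using assms by blast
  have "ip (\<eta>1 - \<eta>2) (\<eta>1 - \<eta>2) = ip (\<xi> - \<eta>2) (\<eta>1 - \<eta>2) - ip (\<xi> - \<eta>1) (\<eta>1 - \<eta>2)"
    by (simp add: ip_diff_left)
  also have "\<dots> = 0" using assms w by simp
  finally show ?thesis by (metis ip_zero_imp eq_iff_diff_eq_0)
qed


lemma hn_sm: "hn (sm c x) = cmod c * hn x"
  unfolding hnorm_def using nn_sm[of c x] by (simp add: real_sqrt_mult)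

end


locale bbsp =
  fixes smA :: "complex \<Rightarrow> 'a::ring_1 \<Rightarrow> 'a" and stA :: "'a \<Rightarrow> 'a"
    and smB :: "complex \<Rightarrow> 'b::ring_1 \<Rightarrow> 'b" and stB :: "'b \<Rightarrow> 'b"
    and L R :: "'b \<Rightarrow> 'a" and E :: "'a \<Rightarrow> 'b" and \<tau> :: "'a \<Rightarrow> complex"
    and sH :: "complex \<Rightarrow> 'h::ab_group_add \<Rightarrow> 'h" and ip :: "'h \<Rightarrow> 'h \<Rightarrow> complex"
    and \<iota> :: "'a \<Rightarrow> 'h" and lam :: "'a \<Rightarrow> 'h \<Rightarrow> 'h"
  assumes A: "analytical_BB_ncps smA stA smB stB L R E \<tau>"
    and L2: "L2_space smA stA \<tau> sH ip \<iota> lam"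
begin

lemma BB: "BB_ncps smA stA smB stB L R E" using A unfolding analytical_BB_ncps_def by blast
lemma saA: "star_algebra smA stA" using BB unfolding BB_ncps_def by blast
lemma saB: "star_algebra smB stB" using BB unfolding BB_ncps_def by blast
lemma Lh: "unital_star_hom smB stB smA stA L" using BB unfolding BB_ncps_def by blast
lemma Rh: "unital_star_antihom smB stB smA stA R" using BB unfolding BB_ncps_def by blast

lemma stA_stA[simp]: "stA (stA x) = x" using saA unfolding star_algebra_def by blast
lemma stA_add: "stA (x + y) = stA x + stA y" using saA unfolding star_algebra_def by blast
lemma stA_mult: "stA (x * y) = stA y * stA x" using saA unfolding star_algebra_def by blast
lemma stB_stB[simp]: "stB (stB x) = x" using saB unfolding star_algebra_def by blast
lemma L_add: "L (x + y) = L x + L y" using Lh unfolding unital_star_hom_def is_clinear_def by blast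
lemma L_sm: "L (smB c x) = smA c (L x)" using Lh unfolding unital_star_hom_def is_clinear_def by blast
lemma L1[simp]: "L 1 = 1" using Lh unfolding unital_star_hom_def by blast
lemma L_mult: "L (x * y) = L x * L y" using Lh unfolding unital_star_hom_def by blast
lemma L_st: "L (stB x) = stA (L x)" using Lh unfolding unital_star_hom_def by blast
lemma R1[simp]: "R 1 = 1" using Rh unfolding unital_star_antihom_def by blast
lemma R_mult: "R (x * y) = R y * R x" using Rh unfolding unital_star_antihom_def by blast
lemma R_st: "R (stB x) = stA (R x)" using Rh unfolding unital_star_antihom_def by blast
lemma LR_comm: "L b1 * R b2 = R b2 * L b1" using BB unfolding BB_ncps_def by blast
lemma E_add: "E (x + y) = E x + E y" using BB unfolding BB_ncps_def is_clinear_def by blast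
lemma E1[simp]: "E 1 = 1" using BB unfolding BB_ncps_def by blast
lemma E_LRa: "E (L b1 * R b2 * a) = b1 * E a * b2" using BB unfolding BB_ncps_def by blast
lemma E_aLR: "E (a * L b) = E (a * R b)" using BB unfolding BB_ncps_def by blast
lemma tau_add: "\<tau> (x + y) = \<tau> x + \<tau> y"
  using A unfolding analytical_BB_ncps_def is_state_def is_clinear_def by blast
lemma tau_LE: "\<tau> a = \<tau> (L (E a))" using A unfolding analytical_BB_ncps_def by blast

lemma hil: "hilb sH ip" unfolding hilb_def using L2 unfolding L2_space_def by blast
lemma iota_add: "\<iota> (x + y) = \<iota> x + \<iota> y" using L2 unfolding L2_space_def is_clinear_def by blast
lemma iota_sm: "\<iota> (smA c x) = sH c (\<iota> x)" using L2 unfolding L2_space_def is_clinear_def by blast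
lemma ip_iota: "ip (\<iota> x) (\<iota> y) = \<tau> (stA y * x)" using L2 unfolding L2_space_def by blast
lemma dense: "e > 0 \<Longrightarrow> \<exists>x. hnorm ip (\<xi> - \<iota> x) < e" using L2 unfolding L2_space_def by blast
lemma lam_bop: "bounded_op sH ip (lam a)" using L2 unfolding L2_space_def by blast
lemma lam_iota: "lam a (\<iota> x) = \<iota> (a * x)" using L2 unfolding L2_space_def by blast

end

sublocale bbsp \<subseteq> hilb sH ip by (rule hil)

context bbsp begin

lemma lam_add: "lam a (x + y) = lam a x + lam a y"
  using lam_bop unfolding bounded_op_def is_clinear_def by blast
lemma lam_diff: "lam a (x - y) = lam a x - lam a y"
  using add_hom_diff[of "lam a"] lam_add by blast
lemma lam_bound: "\<exists>C. C > 0 \<and> (\<forall>x. hn (lam a x) \<le> C * hn x)"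
proof -
  obtain C where C: "\<forall>x. hn (lam a x) \<le> C * hn x" using lam_bop unfolding bounded_op_def by blast
  have "hn (lam a x) \<le> max C 1 * hn x" for x
    using C[rule_format, of x] hn_nonneg[of x] by (smt (verit) mult_right_mono)
  then show ?thesis by (intro exI[of _ "max C 1"]) auto
qed
lemma iota_diff: "\<iota> (x - y) = \<iota> x - \<iota> y"
  using add_hom_diff[of \<iota>] iota_add by blast
lemma tau_diff: "\<tau> (x - y) = \<tau> x - \<tau> y"
  using add_hom_diff[of \<tau>] tau_add by blast
lemma stA_diff: "stA (x - y) = stA x - stA y"
  using add_hom_diff[of stA] stA_add by blast
lemma L_diff: "L (x - y) = L x - L y"
  using add_hom_diff[of L] L_add by blast
lemma L0: "L 0 = 0" using add_hom_zero[of L] L_add by blast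
lemma iota0: "\<iota> 0 = 0" using add_hom_zero[of \<iota>] iota_add by blast

abbreviation "K \<equiv> L2B ip \<iota> L"

lemma K_V: "\<iota> (L b) \<in> K" unfolding L2B_def by (auto intro!: exI[of _ b])
lemma K_approx: "\<zeta> \<in> K \<Longrightarrow> e > 0 \<Longrightarrow> \<exists>b. hn (\<zeta> - \<iota> (L b)) < e"
  unfolding L2B_def by blast
lemma K_closed: assumes "\<forall>e>0. \<exists>\<kappa>\<in>K. hn (\<xi> - \<kappa>) < e" shows "\<xi> \<in> K"
  unfolding L2B_def
proof (intro CollectI allI impI)
  fix e :: real assume "e > 0"
  then have e2: "e/2 > 0" by simp
  then obtain \<kappa> where k: "\<kappa> \<in> K" "hn (\<xi> - \<kappa>) < e/2" using assms by blast
  then obtain b where "hn (\<kappa> - \<iota> (L b)) < e/2" using K_approx[OF k(1) e2] by blast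
  then show "\<exists>b. hn (\<xi> - \<iota> (L b)) < e" using k tri3[of \<xi> "\<iota> (L b)" \<kappa>] by (intro exI[of _ b]) linarith
qed
lemma K_add: assumes "x \<in> K" "y \<in> K" shows "x + y \<in> K"
  unfolding L2B_def
proof (intro CollectI allI impI)
  fix e :: real assume "e > 0"
  then have e2: "e/2 > 0" by simp
  obtain b1 where b1: "hn (x - \<iota> (L b1)) < e/2" using K_approx[OF assms(1) e2] by blast
  obtain b2 where b2: "hn (y - \<iota> (L b2)) < e/2" using K_approx[OF assms(2) e2] by blast
  note b = b1 b2
  have "x + y - \<iota> (L (b1 + b2)) = (x - \<iota> (L b1)) + (y - \<iota> (L b2))"
    by (simp add: L_add iota_add)
  then have "hn (x + y - \<iota> (L (b1 + b2))) = hn ((x - \<iota> (L b1)) + (y - \<iota> (L b2)))" by (simp only:)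
  then have "hn (x + y - \<iota> (L (b1 + b2))) < e" using tri[of "x - \<iota> (L b1)" "y - \<iota> (L b2)"] b by linarith
  then show "\<exists>b. hn (x + y - \<iota> (L b)) < e" by blast
qed
lemma K_sm: assumes "x \<in> K" shows "sH c x \<in> K"
  unfolding L2B_def
proof (intro CollectI allI impI)
  fix e :: real assume "e > 0"
  then have "e / (cmod c + 1) > 0" by (simp add: add_nonneg_pos)
  then obtain b where b: "hn (x - \<iota> (L b)) < e / (cmod c + 1)" using K_approx[OF assms] by blast
  have "sH c x - \<iota> (L (smB c b)) = sH c (x - \<iota> (L b))"
    by (simp add: L_sm iota_sm sm_diff_right)
  then have "hn (sH c x - \<iota> (L (smB c b))) = cmod c * hn (x - \<iota> (L b))" by (simp add: hn_sm)
  also have "\<dots> \<le> (cmod c + 1) * hn (x - \<iota> (L b))" using hn_nonneg by (simp add: mult_right_mono)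
  also have "\<dots> < e" using b by (smt (verit) norm_ge_zero pos_less_divide_eq mult.commute)
  finally show "\<exists>b. hn (sH c x - \<iota> (L b)) < e" by blast
qed
lemma K_diff: "x \<in> K \<Longrightarrow> y \<in> K \<Longrightarrow> x - y \<in> K"
  using K_add[of x "sH (-1) y"] K_sm[of y "-1"] by (simp add: sm_minus1)
lemma K0: "0 \<in> K" using K_V[of 0] L0 iota0 by simp

abbreviation "Et \<equiv> orth_proj ip K"

lemma Et_prop: "Et \<xi> \<in> K \<and> (\<forall>\<kappa>\<in>K. ip (\<xi> - Et \<xi>) \<kappa> = 0)"
proof -
  have ex: "\<exists>\<eta>\<in>K. \<forall>\<kappa>\<in>K. ip (\<xi> - \<eta>) \<kappa> = 0"
    by (rule proj_exists[OF K0 K_add K_sm K_closed]) auto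
  then obtain \<eta> where e: "\<eta> \<in> K" "\<forall>\<kappa>\<in>K. ip (\<xi> - \<eta>) \<kappa> = 0" by blast
  have "\<exists>!\<eta>. \<eta> \<in> K \<and> (\<forall>\<kappa>\<in>K. ip (\<xi> - \<eta>) \<kappa> = 0)"
  proof (rule ex1I[of _ \<eta>])
    show "\<eta> \<in> K \<and> (\<forall>\<kappa>\<in>K. ip (\<xi> - \<eta>) \<kappa> = 0)" using e by simp
    fix x assume "x \<in> K \<and> (\<forall>\<kappa>\<in>K. ip (\<xi> - x) \<kappa> = 0)"
    then show "x = \<eta>" using proj_unique[OF K_diff _ _ e] by simp
  qed
  then show ?thesis unfolding orth_proj_def
    by (rule theI'[where P = "\<lambda>\<eta>. \<eta> \<in> K \<and> (\<forall>\<kappa>\<in>K. ip (\<xi> - \<eta>) \<kappa> = 0)"])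
qed
lemma Et_unique: assumes "\<eta> \<in> K" "\<forall>\<kappa>\<in>K. ip (\<xi> - \<eta>) \<kappa> = 0" shows "Et \<xi> = \<eta>"
  using proj_unique[OF K_diff Et_prop[THEN conjunct1] Et_prop[THEN conjunct2] assms] .


lemma lam_ip_bound: "\<exists>C. \<forall>u w. cmod (ip (lam a u) w) \<le> C * hn w * hn u"
proof -
  obtain C where C: "C > 0" "\<forall>x. hn (lam a x) \<le> C * hn x" using lam_bound by blast
  have "cmod (ip (lam a u) w) \<le> C * hn w * hn u" for u w
  proof -
    have "cmod (ip (lam a u) w) \<le> hn (lam a u) * hn w" by (rule cs)
    also have "\<dots> \<le> (C * hn u) * hn w" using C hn_nonneg by (simp add: mult_right_mono)
    finally show ?thesis by (simp add: mult_ac)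
  qed
  then show ?thesis by blast
qed

lemma adj1: "ip (lam a x) (\<iota> y) = ip x (\<iota> (stA a * y))"
proof -
  define g where "g u = ip (lam a u) (\<iota> y) - ip u (\<iota> (stA a * y))" for u
  obtain C where C: "\<forall>u w. cmod (ip (lam a u) w) \<le> C * hn w * hn u" using lam_ip_bound by blast
  have "g x = 0"
  proof (rule dense_zero[where M = "C * hn (\<iota> y) + hn (\<iota> (stA a * y))"])
    show "g (u - v) = g u - g v" for u v unfolding g_def by (simp add: lam_diff ip_diff_left)
    show "cmod (g u) \<le> (C * hn (\<iota> y) + hn (\<iota> (stA a * y))) * hn u" for u
    proof -
      have "cmod (g u) \<le> cmod (ip (lam a u) (\<iota> y)) + cmod (ip u (\<iota> (stA a * y)))"
        unfolding g_def by (rule norm_triangle_ineq4)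
      also have "\<dots> \<le> C * hn (\<iota> y) * hn u + hn u * hn (\<iota> (stA a * y))"
        using C cs by (meson add_mono)
      finally show ?thesis by (simp add: algebra_simps)
    qed
    show "\<forall>e>0. \<exists>s. g s = 0 \<and> hn (x - s) < e"
    proof (intro allI impI)
      fix e :: real assume "e > 0"
      then obtain x' where x': "hn (x - \<iota> x') < e" using dense by blast
      have "g (\<iota> x') = 0" unfolding g_def by (simp add: lam_iota ip_iota stA_mult mult.assoc)
      then show "\<exists>s. g s = 0 \<and> hn (x - s) < e" using x' by blast
    qed
  qed
  then show ?thesis unfolding g_def by simp
qed

lemma adjoint: "ip (lam a x) y = ip x (lam (stA a) y)"
proof -
  define g where "g v = ip (lam a x) v - ip x (lam (stA a) v)" for v
  obtain C where C: "\<forall>u w. cmod (ip (lam (stA a) u) w) \<le> C * hn w * hn u" using lam_ip_bound by blast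
  have "g y = 0"
  proof (rule dense_zero[where M = "hn (lam a x) + C * hn x"])
    show "g (u - v) = g u - g v" for u v unfolding g_def by (simp add: lam_diff ip_diff_right)
    show "cmod (g u) \<le> (hn (lam a x) + C * hn x) * hn u" for u
    proof -
      have "cmod (g u) \<le> cmod (ip (lam a x) u) + cmod (ip x (lam (stA a) u))"
        unfolding g_def by (rule norm_triangle_ineq4)
      also have "cmod (ip x (lam (stA a) u)) = cmod (ip (lam (stA a) u) x)"
        by (metis complex_mod_cnj ip_cnj)
      also have "cmod (ip (lam a x) u) + cmod (ip (lam (stA a) u) x) \<le> hn (lam a x) * hn u + C * hn x * hn u"
        using C cs by (meson add_mono)
      finally show ?thesis by (simp add: algebra_simps)
    qed
    show "\<forall>e>0. \<exists>s. g s = 0 \<and> hn (y - s) < e"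
    proof (intro allI impI)
      fix e :: real assume "e > 0"
      then obtain y' where y': "hn (y - \<iota> y') < e" using dense by blast
      have "g (\<iota> y') = 0" unfolding g_def by (simp add: lam_iota adj1)
      then show "\<exists>s. g s = 0 \<and> hn (y - s) < e" using y' by blast
    qed
  qed
  then show ?thesis unfolding g_def by simp
qed

lemma orth_ext: assumes "\<zeta> \<in> K" "\<forall>b. ip (\<iota> (L b)) w = 0" shows "ip \<zeta> w = 0"
proof (rule dense_zero[where g = "\<lambda>u. ip u w" and M = "hn w"])
  show "ip (u - v) w = ip u w - ip v w" for u v by (rule ip_diff_left)
  show "cmod (ip u w) \<le> hn w * hn u" for u using cs[of u w] by (simp add: mult.commute)
  show "\<forall>e>0. \<exists>s. ip s w = 0 \<and> hn (\<zeta> - s) < e"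
    using K_approx[OF assms(1)] assms(2) by blast
qed

lemma orth_ext2: assumes "\<kappa> \<in> K" "\<forall>b. ip x (\<iota> (L b)) = 0" shows "ip x \<kappa> = 0"
proof -
  have "ip \<kappa> x = 0" using orth_ext[OF assms(1)] assms(2) by (metis complex_cnj_zero ip_cnj)
  then show ?thesis by (metis complex_cnj_zero ip_cnj)
qed

lemma Et_char: assumes "\<eta> \<in> K" "\<forall>b. ip (\<xi> - \<eta>) (\<iota> (L b)) = 0" shows "Et \<xi> = \<eta>"
  using Et_unique[OF assms(1)] orth_ext2 assms(2) by blast

lemma Et_eq: assumes "\<forall>b. ip (\<xi>1 - \<xi>2) (\<iota> (L b)) = 0" shows "Et \<xi>1 = Et \<xi>2"
proof (rule Et_unique)
  show "Et \<xi>2 \<in> K" using Et_prop by blast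
  show "\<forall>\<kappa>\<in>K. ip (\<xi>1 - Et \<xi>2) \<kappa> = 0"
  proof
    fix \<kappa> assume k: "\<kappa> \<in> K"
    have "\<xi>1 - Et \<xi>2 = (\<xi>1 - \<xi>2) + (\<xi>2 - Et \<xi>2)" by simp
    then have "ip (\<xi>1 - Et \<xi>2) \<kappa> = ip (\<xi>1 - \<xi>2) \<kappa> + ip (\<xi>2 - Et \<xi>2) \<kappa>" by (simp only: ip_add_left)
    also have "ip (\<xi>1 - \<xi>2) \<kappa> = 0" using orth_ext2[OF k] assms by blast
    also have "ip (\<xi>2 - Et \<xi>2) \<kappa> = 0" using Et_prop k by blast
    finally show "ip (\<xi>1 - Et \<xi>2) \<kappa> = 0" by simp
  qed
qed


lemma E_L: "E (L b * a) = b * E a" using E_LRa[of b 1 a] by simp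
lemma E_LR: "E (L b1 * R b2) = b1 * b2" using E_LRa[of b1 b2 1] by simp
lemma E_R: "E (R b) = b"
proof -
  have "E (R b) = E (1 * L b)" using E_aLR[of 1 b] by simp
  also have "\<dots> = b" using E_L[of b 1] by simp
  finally show ?thesis .
qed
lemma tau_R: "\<tau> (R b) = \<tau> (L b)" using tau_LE[of "R b"] E_R by simp
lemma tau_LRa: "\<tau> (L b1 * R b2 * a) = \<tau> (L (b1 * E a * b2))" using tau_LE E_LRa by metis
lemma tau_La: "\<tau> (L b1 * a) = \<tau> (L (b1 * E a))" using tau_LE E_L by metis
lemma tau_LR: "\<tau> (L b1 * R b2) = \<tau> (L (b1 * b2))" using tau_LE E_LR by metis

lemma iota_RL: "\<iota> (R b) = \<iota> (L b)"
proof -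
  define c where "c = stB b"
  have st: "stA (R b - L b) = R c - L c" unfolding c_def by (simp add: stA_diff R_st L_st)
  have "(R c - L c) * (R b - L b) = R c * R b - R c * L b - L c * R b + L c * L b"
    by (simp add: algebra_simps)
  also have "R c * L b = L b * R c" by (simp add: LR_comm)
  also have "R c * R b = R (b * c)" by (simp add: R_mult)
  also have "L c * L b = L (c * b)" by (simp add: L_mult)
  finally have "\<tau> ((R c - L c) * (R b - L b)) = \<tau> (R (b * c)) - \<tau> (L b * R c) - \<tau> (L c * R b) + \<tau> (L (c * b))"
    by (simp add: tau_add tau_diff)
  also have "\<dots> = 0" by (simp add: tau_R tau_LR)
  finally have "ip (\<iota> (R b - L b)) (\<iota> (R b - L b)) = 0" by (simp add: ip_iota st)
  then have "\<iota> (R b - L b) = 0" by (rule ip_zero_imp)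
  then show ?thesis by (simp add: iota_diff)
qed

lemma iota_xR: "\<iota> (x * R b) = \<iota> (x * L b)"
  by (metis lam_iota iota_RL)

lemma LR_V: "lam (L b1 * R b2) (\<iota> (L b)) = \<iota> (L (b1 * b * b2))"
proof -
  have "lam (L b1 * R b2) (\<iota> (L b)) = \<iota> (L b1 * (R b2 * L b))" by (simp add: lam_iota mult.assoc)
  also have "\<dots> = \<iota> (L (b1 * b) * R b2)" by (simp add: LR_comm L_mult mult.assoc)
  also have "\<dots> = \<iota> (L (b1 * b) * L b2)" by (rule iota_xR)
  also have "\<dots> = \<iota> (L (b1 * b * b2))" by (simp add: L_mult)
  finally show ?thesis .
qed

lemma lam_K: assumes "\<forall>b. \<exists>b'. lam T (\<iota> (L b)) = \<iota> (L b')" "\<zeta> \<in> K" shows "lam T \<zeta> \<in> K"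
proof (rule K_closed, intro allI impI)
  fix e :: real assume "e > 0"
  obtain C where C: "C > 0" "\<forall>x. hn (lam T x) \<le> C * hn x" using lam_bound by blast
  have "e / C > 0" using C \<open>e > 0\<close> by simp
  then obtain b where b: "hn (\<zeta> - \<iota> (L b)) < e / C" using K_approx[OF assms(2)] by blast
  obtain b' where b': "lam T (\<iota> (L b)) = \<iota> (L b')" using assms(1) by blast
  have "hn (lam T \<zeta> - \<iota> (L b')) = hn (lam T (\<zeta> - \<iota> (L b)))" by (simp add: lam_diff b')
  also have "\<dots> \<le> C * hn (\<zeta> - \<iota> (L b))" using C by blast
  also have "\<dots> < e" using b C by (simp add: field_simps mult.commute)
  finally show "\<exists>\<kappa>\<in>K. hn (lam T \<zeta> - \<kappa>) < e" using K_V by blast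
qed

lemma LR_K: "\<zeta> \<in> K \<Longrightarrow> lam (L b1 * R b2) \<zeta> \<in> K"
  by (rule lam_K) (use LR_V in auto)

lemma st_LR: "stA (L b1 * R b2) = L (stB b1) * R (stB b2)"
  by (simp add: stA_mult L_st R_st LR_comm)

lemma item1: "tauH ip \<iota> \<xi> = tauH ip \<iota> (Et \<xi>)"
proof -
  have "\<iota> 1 \<in> K" using K_V[of 1] by simp
  then have "ip (\<xi> - Et \<xi>) (\<iota> 1) = 0" using Et_prop by blast
  then show ?thesis unfolding tauH_def by (simp add: ip_diff_left)
qed

lemma item3: "Et (lam (L b1 * R b2) \<xi>) = lam (L b1 * R b2) (Et \<xi>)"
proof (rule Et_unique)
  show "lam (L b1 * R b2) (Et \<xi>) \<in> K" using LR_K Et_prop by blast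
  show "\<forall>\<kappa>\<in>K. ip (lam (L b1 * R b2) \<xi> - lam (L b1 * R b2) (Et \<xi>)) \<kappa> = 0"
  proof
    fix \<kappa> assume k: "\<kappa> \<in> K"
    have "ip (lam (L b1 * R b2) \<xi> - lam (L b1 * R b2) (Et \<xi>)) \<kappa>
        = ip (\<xi> - Et \<xi>) (lam (L (stB b1) * R (stB b2)) \<kappa>)"
      by (simp add: lam_diff[symmetric] adjoint st_LR)
    also have "\<dots> = 0" using Et_prop LR_K[OF k] by blast
    finally show "ip (lam (L b1 * R b2) \<xi> - lam (L b1 * R b2) (Et \<xi>)) \<kappa> = 0" .
  qed
qed

lemma ip_iota_L: "ip (\<iota> x) (\<iota> (L c)) = \<tau> (L (stB c) * x)"
  by (simp add: ip_iota L_st)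

lemma item45_aux:
  assumes z: "\<zeta> \<in> K" and T: "\<forall>b. \<exists>b'. lam T (\<iota> (L b)) = \<iota> (L b')"
    and h: "\<And>b c. ip (\<iota> (a * L b)) (\<iota> (L c)) = ip (\<iota> (T * L b)) (\<iota> (L c))"
  shows "Et (lam a \<zeta>) = lam T \<zeta>"
proof (rule Et_char)
  show "lam T \<zeta> \<in> K" by (rule lam_K[OF T z])
  show "\<forall>c. ip (lam a \<zeta> - lam T \<zeta>) (\<iota> (L c)) = 0"
  proof
    fix c
    define w where "w = lam (stA a) (\<iota> (L c)) - lam (stA T) (\<iota> (L c))"
    have 1: "ip (lam a \<zeta> - lam T \<zeta>) (\<iota> (L c)) = ip \<zeta> w"
      unfolding w_def by (simp add: ip_diff_left ip_diff_right adjoint)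
    have "\<forall>b. ip (\<iota> (L b)) w = 0"
    proof
      fix b
      have "ip (\<iota> (L b)) w = ip (lam a (\<iota> (L b))) (\<iota> (L c)) - ip (lam T (\<iota> (L b))) (\<iota> (L c))"
        unfolding w_def by (simp add: ip_diff_right adjoint)
      also have "\<dots> = 0" using h[of b c] by (simp add: lam_iota)
      finally show "ip (\<iota> (L b)) w = 0" .
    qed
    then show "ip (lam a \<zeta> - lam T \<zeta>) (\<iota> (L c)) = 0" using 1 orth_ext[OF z] by simp
  qed
qed

lemma item4: assumes "a \<in> left_alg R" "\<zeta> \<in> K" shows "Et (lam a \<zeta>) = lam (L (E a)) \<zeta>"
proof (rule item45_aux[OF assms(2)])
  show "\<forall>b. \<exists>b'. lam (L (E a)) (\<iota> (L b)) = \<iota> (L b')" 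
  proof
    fix b show "\<exists>b'. lam (L (E a)) (\<iota> (L b)) = \<iota> (L b')"
      using LR_V[of "E a" 1 b] by (intro exI[of _ "E a * b * 1"]) simp
  qed
  fix b c
  have "a * R b = R b * a" using assms(1) unfolding left_alg_def by blast
  then have "\<iota> (a * L b) = \<iota> (R b * a)" using iota_xR[of a b] by simp
  then have "ip (\<iota> (a * L b)) (\<iota> (L c)) = \<tau> (L (stB c) * R b * a)" by (simp add: ip_iota_L mult.assoc)
  also have "\<dots> = \<tau> (L (stB c * E a * b))" by (rule tau_LRa)
  also have "\<dots> = ip (\<iota> (L (E a) * L b)) (\<iota> (L c))" by (simp add: ip_iota_L L_mult mult.assoc)
  finally show "ip (\<iota> (a * L b)) (\<iota> (L c)) = ip (\<iota> (L (E a) * L b)) (\<iota> (L c))" .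
qed

lemma item5: assumes "a \<in> right_alg L" "\<zeta> \<in> K" shows "Et (lam a \<zeta>) = lam (R (E a)) \<zeta>"
proof (rule item45_aux[OF assms(2)])
  show "\<forall>b. \<exists>b'. lam (R (E a)) (\<iota> (L b)) = \<iota> (L b')" 
  proof
    fix b show "\<exists>b'. lam (R (E a)) (\<iota> (L b)) = \<iota> (L b')"
      using LR_V[of 1 "E a" b] by (intro exI[of _ "1 * b * E a"]) simp
  qed
  fix b c
  have "a * L b = L b * a" using assms(1) unfolding right_alg_def by blast
  then have "ip (\<iota> (a * L b)) (\<iota> (L c)) = \<tau> (L (stB c * b) * a)" by (simp add: ip_iota_L mult.assoc L_mult)
  also have "\<dots> = \<tau> (L (stB c * b * E a))" by (rule tau_La)
  also have "\<dots> = \<tau> (L (stB c * b) * R (E a))" by (rule tau_LR[symmetric])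
  also have "\<dots> = \<tau> (L (stB c) * (L b * R (E a)))" by (simp add: L_mult mult.assoc)
  also have "\<dots> = ip (\<iota> (R (E a) * L b)) (\<iota> (L c))" by (simp add: ip_iota_L LR_comm)
  finally show "ip (\<iota> (a * L b)) (\<iota> (L c)) = ip (\<iota> (R (E a) * L b)) (\<iota> (L c))" .
qed

lemma tauH_L: "tauH ip \<iota> (lam (L b) \<xi>) = ip \<xi> (\<iota> (L (stB b)))"
  unfolding tauH_def by (simp only: adjoint lam_iota L_st mult_1_right)
lemma tauH_R: "tauH ip \<iota> (lam (R b) \<xi>) = ip \<xi> (\<iota> (L (stB b)))"
  unfolding tauH_def by (simp only: adjoint lam_iota R_st[symmetric] mult_1_right iota_RL)

lemma item67: assumes "\<forall>c. ip \<xi>1 (\<iota> (L (stB c))) = ip \<xi>2 (\<iota> (L (stB c)))" shows "Et \<xi>1 = Et \<xi>2"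
proof (rule Et_eq, rule allI)
  fix b
  show "ip (\<xi>1 - \<xi>2) (\<iota> (L b)) = 0" using assms[rule_format, of "stB b"] by (simp add: ip_diff_left)
qed

end

theorem proposition3p9:
  fixes smA :: "complex \<Rightarrow> 'a::ring_1 \<Rightarrow> 'a" and stA :: "'a \<Rightarrow> 'a"
    and smB :: "complex \<Rightarrow> 'b::ring_1 \<Rightarrow> 'b" and stB :: "'b \<Rightarrow> 'b"
    and L R :: "'b \<Rightarrow> 'a" and E :: "'a \<Rightarrow> 'b" and \<tau> :: "'a \<Rightarrow> complex"
    and sH :: "complex \<Rightarrow> 'h::ab_group_add \<Rightarrow> 'h" and ip :: "'h \<Rightarrow> 'h \<Rightarrow> complex"
    and \<iota> :: "'a \<Rightarrow> 'h" and lam :: "'a \<Rightarrow> 'h \<Rightarrow> 'h"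
  assumes "analytical_BB_ncps smA stA smB stB L R E \<tau>"
    and "L2_space smA stA \<tau> sH ip \<iota> lam"
  defines "Et \<equiv> orth_proj ip (L2B ip \<iota> L)"
  shows
    "(\<forall>\<xi>. tauH ip \<iota> \<xi> = tauH ip \<iota> (Et \<xi>)) \<and>
     (\<forall>a b. Et (\<iota> (a * L b)) = Et (\<iota> (a * R b))) \<and>
     (\<forall>b1 b2 \<xi>. Et (lam (L b1 * R b2) \<xi>) = lam (L b1 * R b2) (Et \<xi>)) \<and>
     (\<forall>a \<zeta>. a \<in> left_alg R \<longrightarrow> \<zeta> \<in> L2B ip \<iota> L \<longrightarrow> Et (lam a \<zeta>) = lam (L (E a)) \<zeta>) \<and>
     (\<forall>a \<zeta>. a \<in> right_alg L \<longrightarrow> \<zeta> \<in> L2B ip \<iota> L \<longrightarrow> Et (lam a \<zeta>) = lam (R (E a)) \<zeta>) \<and>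
     (\<forall>\<xi>1 \<xi>2. (\<forall>b. tauH ip \<iota> (lam (L b) \<xi>1) = tauH ip \<iota> (lam (L b) \<xi>2)) \<longrightarrow> Et \<xi>1 = Et \<xi>2) \<and>
     (\<forall>\<xi>1 \<xi>2. (\<forall>b. tauH ip \<iota> (lam (R b) \<xi>1) = tauH ip \<iota> (lam (R b) \<xi>2)) \<longrightarrow> Et \<xi>1 = Et \<xi>2)"
  proof -
  interpret B: bbsp smA stA smB stB L R E \<tau> sH ip \<iota> lam
    by (rule bbsp.intro[OF assms(1) assms(2)])
  have i6: "Et \<xi>1 = Et \<xi>2" if "\<forall>b. tauH ip \<iota> (lam (L b) \<xi>1) = tauH ip \<iota> (lam (L b) \<xi>2)" for \<xi>1 \<xi>2
    unfolding Et_def using that by (intro B.item67) (simp add: B.tauH_L)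
  have i7: "Et \<xi>1 = Et \<xi>2" if "\<forall>b. tauH ip \<iota> (lam (R b) \<xi>1) = tauH ip \<iota> (lam (R b) \<xi>2)" for \<xi>1 \<xi>2
    unfolding Et_def using that by (intro B.item67) (simp add: B.tauH_R)
  show ?thesis
    unfolding Et_def
    using B.item1 B.iota_xR B.item3 B.item4 B.item5 i6[unfolded Et_def] i7[unfolded Et_def]
    by simp
qed

end
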